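(* Let $\gamma_a,\gamma_s>0$, $\lambda\ge0$, $q>0$, $\sigma_B>0$, $\varepsilon_a\in(0,2)$, and let $\beta_a,\beta_s:\mathbb R\to\mathbb R$ be globally Lipschitz continuous with $\beta_a\ge0$, $\beta_s>0$. If $T_a^{(0)}\ge0$ and $T_s^{(0)}\ge0$, then the maximal solution of \[ \begin{cases} \gamma_a T_a'=-\lambda(T_a-T_s)+\varepsilon_a\sigma_B|T_s|^3T_s-2\varepsilon_a\sigma_B|T_a|^3T_a+q\beta_a(T_a),\\ \gamma_s T_s'=-\lambda(T_s-T_a)-\sigma_B|T_s|^3T_s+\varepsilon_a\sigma_B|T_a|^3T_a+q\beta_s(T_s),\\ T_a(0)=T_a^{(0)},\quad T_s(0)=T_s^{(0)} \end{cases} \] exists on $[0,+\infty)$. *)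

theory Defs
  imports "HOL-Analysis.Analysis"
begin

end

theory Submission
  imports Defs
begin

lemma int_pow:
  fixes K t :: real
  assumes "0 \<le> t"
  shows "((\<lambda>s. K * s^n) has_integral (K * t^(Suc n) / Suc n)) {0..t}"
proof -
  have "((\<lambda>s. K * s^n) has_integral ((\<lambda>s. K * s^(Suc n) / Suc n) t - (\<lambda>s. K * s^(Suc n) / Suc n) 0)) {0..t}"
  proof (rule fundamental_theorem_of_calculus[OF assms])
    fix x :: real assume "x \<in> {0..t}"
    show "((\<lambda>s. K * s ^ Suc n / real (Suc n)) has_vector_derivative K * x ^ n) (at x within {0..t})"
      unfolding has_real_derivative_iff_has_vector_derivative[symmetric]
      by (auto intro!: derivative_eq_intros simp del: power_Suc of_nat_Suc)
  qed
  then show ?thesis by simp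
qed

lemma picard_global:
  fixes f :: "'a::banach \<Rightarrow> 'a" and x0 :: 'a
  assumes lip: "\<And>x y. norm (f x - f y) \<le> L * norm (x - y)" and L0: "0 \<le> L"
  shows "\<exists>x. x 0 = x0 \<and> (\<forall>t\<ge>0. (x has_vector_derivative f (x t)) (at t within {0..}))"
proof -
  have fcont: "continuous_on UNIV f"
    by (rule lipschitz_on_continuous_on[of L]) (auto intro!: lipschitz_onI simp: dist_norm lip L0)
  define P where "P = rec_nat (\<lambda>t::real. x0) (\<lambda>n p t. x0 + integral {0..t} (\<lambda>s. f (p s)))"
  have P0: "P 0 = (\<lambda>t. x0)" and PS: "\<And>n. P (Suc n) = (\<lambda>t. x0 + integral {0..t} (\<lambda>s. f (P n s)))"
    by (simp_all add: P_def)
  have Pc: "continuous_on {0..T} (P n)" for n T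
  proof (induction n)
    case 0 show ?case by (simp add: P0)
  next
    case (Suc n)
    have "continuous_on {0..T} (\<lambda>s. f (P n s))" using continuous_on_compose2[OF fcont Suc] by auto
    hence "(\<lambda>s. f (P n s)) integrable_on {0..T}" by (rule integrable_continuous_real)
    from indefinite_integral_continuous_1[OF this] show ?case unfolding PS by (intro continuous_intros)
  qed
  have Pint: "(\<lambda>s. f (P n s)) integrable_on {0..T}" for n T
  proof -
    have "continuous_on {0..T} (\<lambda>s. f (P n s))" using continuous_on_compose2[OF fcont Pc] by auto
    thus ?thesis by (rule integrable_continuous_real)
  qed
  define C where "C = norm (f x0)"
  have C0: "0 \<le> C" by (simp add: C_def)
  have est: "norm (P (Suc n) t - P n t) \<le> C * L^n * t^(Suc n) / fact (Suc n)" if "0 \<le> t" for n t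
    using that
  proof (induction n arbitrary: t)
    case 0
    then show ?case by (simp add: PS P0 C_def)
  next
    case (Suc n)
    have eq: "P (Suc (Suc n)) t - P (Suc n) t = integral {0..t} (\<lambda>s. f (P (Suc n) s) - f (P n s))"
    proof -
      have a: "P (Suc (Suc n)) t = x0 + integral {0..t} (\<lambda>s. f (P (Suc n) s))" by (rule fun_cong[OF PS])
      have b: "P (Suc n) t = x0 + integral {0..t} (\<lambda>s. f (P n s))" by (rule fun_cong[OF PS])
      show ?thesis unfolding a b by (simp add: integral_diff[OF Pint Pint])
    qed
    have hi: "((\<lambda>s. L * (C * L^n / fact (Suc n)) * s^(Suc n)) has_integral
               (L * (C * L^n / fact (Suc n)) * t^(Suc (Suc n)) / Suc (Suc n))) {0..t}"
      by (rule int_pow) (use Suc.prems in auto)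
    have "norm (integral {0..t} (\<lambda>s. f (P (Suc n) s) - f (P n s))) \<le> integral {0..t} (\<lambda>s. L * (C * L^n / fact (Suc n)) * s^(Suc n))"
    proof (rule integral_norm_bound_integral)
      show "(\<lambda>s. f (P (Suc n) s) - f (P n s)) integrable_on {0..t}" using integrable_diff[OF Pint Pint] .
      show "(\<lambda>s. L * (C * L^n / fact (Suc n)) * s^(Suc n)) integrable_on {0..t}" using hi by blast
      fix s assume s: "s \<in> {0..t}"
      have "norm (f (P (Suc n) s) - f (P n s)) \<le> L * norm (P (Suc n) s - P n s)" by (rule lip)
      also have "\<dots> \<le> L * (C * L^n * s^(Suc n) / fact (Suc n))"
        using Suc.IH[of s] s L0 by (intro mult_left_mono) auto
      finally show "norm (f (P (Suc n) s) - f (P n s)) \<le> L * (C * L^n / fact (Suc n)) * s^(Suc n)"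
        by simp
    qed
    also have "\<dots> = L * (C * L^n / fact (Suc n)) * t^(Suc (Suc n)) / Suc (Suc n)"
      using hi by (rule integral_unique)
    also have "\<dots> = C * L^(Suc n) * t^(Suc (Suc n)) / fact (Suc (Suc n))"
      by (simp add: field_simps)
    finally show ?case using eq by simp
  qed
  define D where "D k t = P (Suc k) t - P k t" for k t
  define x where "x t = x0 + (\<Sum>k. D k t)" for t
  have tel: "P n t = x0 + (\<Sum>k<n. D k t)" for n t
    unfolding D_def by (subst sum_lessThan_telescope) (simp add: P0)
  have ul: "uniform_limit {0..T} P x sequentially" if T0: "0 \<le> T" for T
  proof -
    have "uniform_limit {0..T} (\<lambda>n t. \<Sum>k<n. D k t) (\<lambda>t. \<Sum>k. D k t) sequentially"
    proof (rule Weierstrass_m_test)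
      fix n t assume t: "t \<in> {0..T}"
      have "norm (D n t) \<le> C * L^n * t^(Suc n) / fact (Suc n)" unfolding D_def using est t by auto
      also have "\<dots> \<le> C * L^n * T^(Suc n) / fact (Suc n)"
        using t C0 L0 by (intro divide_right_mono mult_left_mono power_mono) auto
      also have "\<dots> \<le> C * L^n * T^(Suc n) / fact n"
        using t C0 L0 T0 by (intro divide_left_mono mult_nonneg_nonneg) (auto simp: fact_mono)
      also have "\<dots> = C * T * (inverse (fact n) * (L * T)^n)"
        by (simp add: field_simps power_mult_distrib)
      finally show "norm (D n t) \<le> C * T * (inverse (fact n) * (L * T)^n)" .
    next
      show "summable (\<lambda>n. C * T * (inverse (fact n) * (L * T)^n))"
        by (intro summable_mult summable_exp)
    qed
    then show ?thesis
      unfolding uniform_limit_iff by (simp add: tel x_def dist_norm)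
  qed
  have xc: "continuous_on {0..T} x" if "0 \<le> T" for T
    by (rule uniform_limit_theorem[OF _ ul[OF that]]) (auto simp: Pc)
  have x00: "x 0 = x0"
  proof -
    have "D k 0 = 0" for k by (cases k) (simp_all add: D_def PS P0)
    thus ?thesis by (simp add: x_def)
  qed
  have ie: "x t = x0 + integral {0..t} (\<lambda>s. f (x s))" if t0: "0 \<le> t" for t
  proof -
    have xint: "(\<lambda>s. f (x s)) integrable_on {0..t}"
      using continuous_on_compose2[OF fcont xc[OF t0]] by (auto intro: integrable_continuous_real)
    define z where "z = x t - (x0 + integral {0..t} (\<lambda>s. f (x s)))"
    have zb: "norm z \<le> e * (1 + L*t)" if e: "e > 0" for e
    proof -
      from ul[OF t0] e obtain N where N: "\<And>n. n \<ge> N \<Longrightarrow> \<forall>s\<in>{0..t}. dist (P n s) (x s) < e"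
        unfolding uniform_limit_iff eventually_sequentially by blast
      have 1: "norm (x t - P (Suc N) t) \<le> e"
        using N[of "Suc N"] t0 by (auto simp: dist_norm norm_minus_commute less_imp_le)
      have "norm (integral {0..t} (\<lambda>s. f (P N s) - f (x s))) \<le> integral {0..t} (\<lambda>s. L * e)"
      proof (rule integral_norm_bound_integral)
        show "(\<lambda>s. f (P N s) - f (x s)) integrable_on {0..t}" using integrable_diff[OF Pint xint] .
        show "(\<lambda>s. L * e) integrable_on {0..t}" by (rule integrable_continuous_real) simp
        fix s assume s: "s \<in> {0..t}"
        have "norm (f (P N s) - f (x s)) \<le> L * norm (P N s - x s)" by (rule lip)
        also have "\<dots> \<le> L * e" using N[of N] s L0 by (intro mult_left_mono) (auto simp: dist_norm less_imp_le)
        finally show "norm (f (P N s) - f (x s)) \<le> L * e" .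
      qed
      also have "\<dots> = L * e * t" using t0 by simp
      finally have 2: "norm (integral {0..t} (\<lambda>s. f (P N s)) - integral {0..t} (\<lambda>s. f (x s))) \<le> L * e * t"
        by (simp add: integral_diff[OF Pint xint])
      have "z = (x t - P (Suc N) t) + (integral {0..t} (\<lambda>s. f (P N s)) - integral {0..t} (\<lambda>s. f (x s)))"
        by (simp add: z_def PS)
      hence "norm z \<le> norm (x t - P (Suc N) t) + norm (integral {0..t} (\<lambda>s. f (P N s)) - integral {0..t} (\<lambda>s. f (x s)))"
        by (metis norm_triangle_ineq)
      also have "\<dots> \<le> e + L * e * t" using 1 2 by linarith
      finally show ?thesis by (simp add: algebra_simps)
    qed
    have "z = 0"
    proof (rule ccontr)
      assume "z \<noteq> 0"
      hence zp: "norm z > 0" by simp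
      have p: "1 + L * t > 0" using L0 t0 by (simp add: add_pos_nonneg)
      have "norm z \<le> (norm z / (2 * (1 + L*t))) * (1 + L*t)" using zb[of "norm z / (2 * (1 + L*t))"] zp p by simp
      also have "\<dots> = norm z / 2" using p by (simp add: field_simps)
      finally show False using zp by simp
    qed
    thus ?thesis by (simp add: z_def)
  qed
  have "(x has_vector_derivative f (x t)) (at t within {0..})" if t0: "0 \<le> t" for t
  proof -
    have c1: "continuous_on {0..t+1} (\<lambda>s. f (x s))"
      using continuous_on_compose2[OF fcont xc[of "t+1"]] t0 by auto
    have "((\<lambda>u. x0 + integral {0..u} (\<lambda>s. f (x s))) has_vector_derivative f (x t)) (at t within {0..t+1})"
      using integral_has_vector_derivative[OF c1, of t] t0
      by (auto intro!: derivative_eq_intros)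
    hence "(x has_vector_derivative f (x t)) (at t within {0..t+1})"
      by (rule has_vector_derivative_transform[rotated 2]) (use t0 ie in auto)
    moreover have "at t within {0..t+1} = at t within {0..}"
      by (rule at_within_nhd[of t "{t - 1<..<t+1}"]) auto
    ultimately show ?thesis by simp
  qed
  thus ?thesis using x00 by blast
qed


lemma barrier:
  fixes phi phi' :: "real \<Rightarrow> real" and K t :: real
  assumes d: "\<And>t. 0 \<le> t \<Longrightarrow> (phi has_real_derivative phi' t) (at t within {0..})"
    and i: "phi 0 \<le> K"
    and n: "\<And>t. 0 < t \<Longrightarrow> K < phi t \<Longrightarrow> phi t < K + 1 \<Longrightarrow> phi' t \<le> 0"
    and t0: "0 \<le> t"
  shows "phi t \<le> K"
proof (rule ccontr)
  assume "\<not> phi t \<le> K"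
  hence gt: "phi t > K" by simp
  have cont: "continuous_on {0..} phi"
    using d by (auto simp: continuous_on_eq_continuous_within intro: DERIV_continuous)
  define mm where "mm = min (phi t - K) 1"
  define c where "c = K + mm / 2"
  have m: "mm > 0" "mm \<le> phi t - K" "mm \<le> 1" using gt by (auto simp: mm_def)
  have c1: "K < c" using m unfolding c_def by linarith
  have c2: "c < K+1" using m unfolding c_def by linarith
  have c3: "c \<le> phi t" using m unfolding c_def by linarith
  note c = c1 c2 c3
  define A where "A = {0..t} \<inter> phi -` {c..}"
  have clA: "closed A" unfolding A_def
    by (rule continuous_closed_preimage) (auto intro: continuous_on_subset[OF cont])
  have tA: "t \<in> A" using c t0 by (auto simp: A_def)
  have bA: "bdd_below A" by (auto simp: A_def bdd_below_def)
  define t1 where "t1 = Inf A"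
  have t1A: "t1 \<in> A" unfolding t1_def using closed_contains_Inf[OF _ bA clA] tA by blast
  have below: "phi s < c" if "0 \<le> s" "s < t1" for s
  proof (rule ccontr)
    assume "\<not> phi s < c"
    hence "s \<in> A" using that t1A by (auto simp: A_def)
    hence "t1 \<le> s" unfolding t1_def by (rule cInf_lower[OF _ bA])
    thus False using that by simp
  qed
  have t1p: "0 \<le> t1" "t1 \<le> t" "c \<le> phi t1" using t1A by (auto simp: A_def)
  define B where "B = {0..t1} \<inter> phi -` {..K}"
  have clB: "closed B" unfolding B_def
    by (rule continuous_closed_preimage) (auto intro: continuous_on_subset[OF cont])
  have zB: "0 \<in> B" using i t1p by (auto simp: B_def)
  have bB: "bdd_above B" by (auto simp: B_def bdd_above_def)
  define s0 where "s0 = Sup B"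
  have s0B: "s0 \<in> B" unfolding s0_def using closed_contains_Sup[OF _ bB clB] zB by blast
  have above: "phi s > K" if "s0 < s" "s \<le> t1" for s
  proof (rule ccontr)
    assume "\<not> phi s > K"
    hence "s \<in> B" using that s0B by (auto simp: B_def)
    hence "s \<le> s0" unfolding s0_def by (rule cSup_upper[OF _ bB])
    thus False using that by simp
  qed
  have s0p: "0 \<le> s0" "s0 \<le> t1" "phi s0 \<le> K" using s0B by (auto simp: B_def)
  have lt: "s0 < t1"
  proof (rule ccontr)
    assume "\<not> s0 < t1"
    hence "s0 = t1" using s0p by simp
    thus False using s0p t1p c by simp
  qed
  have der: "(phi has_real_derivative phi' s) (at s)" if "0 < s" for s
  proof -
    have "at s within {0..} = at s" by (rule at_within_interior) (use that in auto)
    thus ?thesis using d[of s] that by simp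
  qed
  have contI: "continuous_on {s0..t1} phi" by (rule continuous_on_subset[OF cont]) (use s0p in auto)
  have difI: "phi differentiable (at z)" if "s0 < z" "z < t1" for z
  proof -
    have "0 < z" using that s0p by simp
    thus ?thesis using der[of z] unfolding real_differentiable_def by blast
  qed
  obtain l z where z: "s0 < z" "z < t1" "DERIV phi z :> l" "phi t1 - phi s0 = (t1 - s0) * l"
    using MVT[OF lt contI difI] by blast
  have "l = phi' z" using DERIV_unique[OF z(3) der] z s0p by auto
  moreover have "phi' z \<le> 0" using n[of z] above[of z] below[of z] z s0p c by auto
  ultimately have "(t1 - s0) * l \<le> 0" using lt by (simp add: mult_nonneg_nonpos)
  hence "phi t1 \<le> phi s0" using z(4) by linarith
  thus False using s0p t1p c by linarith
qed


definition FA :: "real \<Rightarrow> real \<Rightarrow> real \<Rightarrow> real \<Rightarrow> (real \<Rightarrow> real) \<Rightarrow> real \<Rightarrow> real \<Rightarrow> real" where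
  "FA lam eps sig q ba a b = - lam * (a - b) + eps * sig * \<bar>b\<bar>^3 * b - 2 * eps * sig * \<bar>a\<bar>^3 * a + q * ba a"

definition FS :: "real \<Rightarrow> real \<Rightarrow> real \<Rightarrow> real \<Rightarrow> (real \<Rightarrow> real) \<Rightarrow> real \<Rightarrow> real \<Rightarrow> real" where
  "FS lam eps sig q bs a b = - lam * (b - a) - sig * \<bar>b\<bar>^3 * b + eps * sig * \<bar>a\<bar>^3 * a + q * bs b"

lemma quart_lip:
  fixes u v R :: real
  assumes "0 \<le> u" "u \<le> R" "0 \<le> v" "v \<le> R"
  shows "\<bar>\<bar>u\<bar>^3 * u - \<bar>v\<bar>^3 * v\<bar> \<le> 4 * R^3 * \<bar>u - v\<bar>"
proof -
  have "\<bar>u\<bar>^3 * u - \<bar>v\<bar>^3 * v = (u - v) * ((u + v) * (u^2 + v^2))"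
    using assms by (simp add: algebra_simps power2_eq_square power3_eq_cube)
  hence e1: "\<bar>\<bar>u\<bar>^3 * u - \<bar>v\<bar>^3 * v\<bar> = \<bar>u - v\<bar> * ((u + v) * (u^2 + v^2))"
    using assms by (simp add: abs_mult)
  have "u^2 \<le> R^2" "v^2 \<le> R^2" using assms by (auto intro: power_mono)
  hence "(u + v) * (u^2 + v^2) \<le> (2*R) * (2 * R^2)"
    using assms by (intro mult_mono; (linarith | simp))
  hence "\<bar>u - v\<bar> * ((u + v) * (u^2 + v^2)) \<le> \<bar>u - v\<bar> * ((2*R) * (2 * R^2))"
    by (intro mult_left_mono) auto
  with e1 have "\<bar>\<bar>u\<bar>^3 * u - \<bar>v\<bar>^3 * v\<bar> \<le> \<bar>u - v\<bar> * ((2*R) * (2 * R^2))" by simp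
  thus ?thesis by (simp add: algebra_simps power2_eq_square power3_eq_cube)
qed

lemma clamp_lip:
  fixes R x y :: real
  shows "\<bar>max 0 (min R x) - max 0 (min R y)\<bar> \<le> \<bar>x - y\<bar>"
  by (simp add: max_def min_def)

lemma absmul: fixes c X Y :: real shows "0 \<le> c \<Longrightarrow> \<bar>X\<bar> \<le> Y \<Longrightarrow> \<bar>c * X\<bar> \<le> c * Y"
  by (simp add: abs_mult mult_left_mono)

lemma tri4: fixes u1 u2 u3 u4 :: real shows "\<bar>u1 + u2 - u3 + u4\<bar> \<le> \<bar>u1\<bar> + \<bar>u2\<bar> + \<bar>u3\<bar> + \<bar>u4\<bar>"
  by arith

lemma tri4': fixes u1 u2 u3 u4 :: real shows "\<bar>u1 - u2 + u3 + u4\<bar> \<le> \<bar>u1\<bar> + \<bar>u2\<bar> + \<bar>u3\<bar> + \<bar>u4\<bar>"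
  by arith

lemma FA_lip:
  assumes "0 \<le> lam" "0 \<le> eps" "0 \<le> sig" "0 \<le> q"
    and bl: "\<And>x y. \<bar>ba x - ba y\<bar> \<le> La * \<bar>x - y\<bar>" and La: "0 \<le> La"
    and r: "0 \<le> a" "a \<le> R" "0 \<le> a'" "a' \<le> R" "0 \<le> b" "b \<le> R" "0 \<le> b'" "b' \<le> R"
    and d: "\<bar>a - a'\<bar> \<le> d" "\<bar>b - b'\<bar> \<le> d"
  shows "\<bar>FA lam eps sig q ba a b - FA lam eps sig q ba a' b'\<bar> \<le> (2*lam + 12*eps * sig*R^3 + q*La) * d"
proof -
  have eq: "FA lam eps sig q ba a b - FA lam eps sig q ba a' b' =
     - lam * ((a - a') - (b - b')) + eps * sig * (\<bar>b\<bar>^3 * b - \<bar>b'\<bar>^3 * b')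
     - 2 * eps * sig * (\<bar>a\<bar>^3 * a - \<bar>a'\<bar>^3 * a') + q * (ba a - ba a')"
    by (simp add: FA_def algebra_simps)
  have t1: "\<bar>- lam * ((a - a') - (b - b'))\<bar> \<le> lam * (2 * d)"
    using d assms by (simp add: abs_mult) (intro mult_left_mono; linarith)
  have t2: "\<bar>eps * sig * (\<bar>b\<bar>^3 * b - \<bar>b'\<bar>^3 * b')\<bar> \<le> eps * sig * (4 * R^3 * d)"
  proof -
    have h: "\<bar>\<bar>b\<bar>^3 * b - \<bar>b'\<bar>^3 * b'\<bar> \<le> 4 * R^3 * d"
    proof -
      have "4*R^3*\<bar>b - b'\<bar> \<le> 4*R^3*d" using r d by (intro mult_left_mono) auto
      with quart_lip[of b R b'] r show ?thesis by linarith
    qed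
    show ?thesis by (rule absmul[OF _ h]) (use assms in auto)
  qed
  have t3: "\<bar>2 * eps * sig * (\<bar>a\<bar>^3 * a - \<bar>a'\<bar>^3 * a')\<bar> \<le> 2 * eps * sig * (4 * R^3 * d)"
  proof -
    have h: "\<bar>\<bar>a\<bar>^3 * a - \<bar>a'\<bar>^3 * a'\<bar> \<le> 4 * R^3 * d"
    proof -
      have "4*R^3*\<bar>a - a'\<bar> \<le> 4*R^3*d" using r d by (intro mult_left_mono) auto
      with quart_lip[of a R a'] r show ?thesis by linarith
    qed
    show ?thesis by (rule absmul[OF _ h]) (use assms in auto)
  qed
  have t4: "\<bar>q * (ba a - ba a')\<bar> \<le> q * (La * d)"
  proof -
    have h: "\<bar>ba a - ba a'\<bar> \<le> La * d" proof -
      have "La*\<bar>a - a'\<bar> \<le> La*d" using La d by (intro mult_left_mono) auto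
      with bl[of a a'] show ?thesis by linarith
    qed
    show ?thesis by (rule absmul[OF _ h]) (use assms in auto)
  qed
  have "(2*lam + 12*eps * sig*R^3 + q*La) * d = lam * (2 * d) + eps * sig * (4 * R^3 * d) + 2 * eps * sig * (4 * R^3 * d) + q * (La * d)"
    by (simp add: algebra_simps)
  moreover note tri4[of "- lam * ((a - a') - (b - b'))" "eps * sig * (\<bar>b\<bar>^3 * b - \<bar>b'\<bar>^3 * b')"
     "2 * eps * sig * (\<bar>a\<bar>^3 * a - \<bar>a'\<bar>^3 * a')" "q * (ba a - ba a')"]
  ultimately show ?thesis unfolding eq using t1 t2 t3 t4 by linarith
qed

lemma FS_lip:
  assumes "0 \<le> lam" "0 \<le> eps" "0 \<le> sig" "0 \<le> q"
    and bl: "\<And>x y. \<bar>bs x - bs y\<bar> \<le> Ls * \<bar>x - y\<bar>" and Ls: "0 \<le> Ls"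
    and r: "0 \<le> a" "a \<le> R" "0 \<le> a'" "a' \<le> R" "0 \<le> b" "b \<le> R" "0 \<le> b'" "b' \<le> R"
    and d: "\<bar>a - a'\<bar> \<le> d" "\<bar>b - b'\<bar> \<le> d"
  shows "\<bar>FS lam eps sig q bs a b - FS lam eps sig q bs a' b'\<bar> \<le> (2*lam + 4 * sig*R^3 + 4*eps * sig*R^3 + q*Ls) * d"
proof -
  have eq: "FS lam eps sig q bs a b - FS lam eps sig q bs a' b' =
     - lam * ((b - b') - (a - a')) - sig * (\<bar>b\<bar>^3 * b - \<bar>b'\<bar>^3 * b')
     + eps * sig * (\<bar>a\<bar>^3 * a - \<bar>a'\<bar>^3 * a') + q * (bs b - bs b')"
    by (simp add: FS_def algebra_simps)
  have t1: "\<bar>- lam * ((b - b') - (a - a'))\<bar> \<le> lam * (2 * d)"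
    using d assms by (simp add: abs_mult) (intro mult_left_mono; linarith)
  have t2: "\<bar>sig * (\<bar>b\<bar>^3 * b - \<bar>b'\<bar>^3 * b')\<bar> \<le> sig * (4 * R^3 * d)"
  proof -
    have h: "\<bar>\<bar>b\<bar>^3 * b - \<bar>b'\<bar>^3 * b'\<bar> \<le> 4 * R^3 * d"
    proof -
      have "4*R^3*\<bar>b - b'\<bar> \<le> 4*R^3*d" using r d by (intro mult_left_mono) auto
      with quart_lip[of b R b'] r show ?thesis by linarith
    qed
    show ?thesis by (rule absmul[OF _ h]) (use assms in auto)
  qed
  have t3: "\<bar>eps * sig * (\<bar>a\<bar>^3 * a - \<bar>a'\<bar>^3 * a')\<bar> \<le> eps * sig * (4 * R^3 * d)"
  proof -
    have h: "\<bar>\<bar>a\<bar>^3 * a - \<bar>a'\<bar>^3 * a'\<bar> \<le> 4 * R^3 * d"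
    proof -
      have "4*R^3*\<bar>a - a'\<bar> \<le> 4*R^3*d" using r d by (intro mult_left_mono) auto
      with quart_lip[of a R a'] r show ?thesis by linarith
    qed
    show ?thesis by (rule absmul[OF _ h]) (use assms in auto)
  qed
  have t4: "\<bar>q * (bs b - bs b')\<bar> \<le> q * (Ls * d)"
  proof -
    have h: "\<bar>bs b - bs b'\<bar> \<le> Ls * d" proof -
      have "Ls*\<bar>b - b'\<bar> \<le> Ls*d" using Ls d by (intro mult_left_mono) auto
      with bl[of b b'] show ?thesis by linarith
    qed
    show ?thesis by (rule absmul[OF _ h]) (use assms in auto)
  qed
  have "(2*lam + 4 * sig*R^3 + 4*eps * sig*R^3 + q*Ls) * d = lam * (2 * d) + sig * (4 * R^3 * d) + eps * sig * (4 * R^3 * d) + q * (Ls * d)"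
    by (simp add: algebra_simps)
  moreover note tri4'[of "- lam * ((b - b') - (a - a'))" "sig * (\<bar>b\<bar>^3 * b - \<bar>b'\<bar>^3 * b')"
     "eps * sig * (\<bar>a\<bar>^3 * a - \<bar>a'\<bar>^3 * a')" "q * (bs b - bs b')"]
  ultimately show ?thesis unfolding eq using t1 t2 t3 t4 by linarith
qed


lemma pm4: fixes a b :: real shows "(a+b)^4 \<le> 8*(a^4+b^4)"
proof -
  have h1: "(a+b)^2 \<le> 2*(a^2+b^2)" using sum_squares_ge_zero[of "a-b" 0]
    by (simp add: power2_eq_square algebra_simps)
  have "(a+b)^4 = ((a+b)^2)^2" by simp
  also have "\<dots> \<le> (2*(a^2+b^2))^2" using h1 by (intro power_mono) auto
  also have "\<dots> = 4*(a^2+b^2)^2" by (simp only: power_mult_distrib) simp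
  also have "(a^2+b^2)^2 \<le> 2*(a^4+b^4)"
  proof -
    have "0 \<le> (a^2-b^2)^2" by simp
    thus ?thesis by (simp add: power2_eq_square algebra_simps power4_eq_xxxx)
  qed
  hence "4*(a^2+b^2)^2 \<le> 4*(2*(a^4+b^4))" by simp
  finally show ?thesis by simp
qed

lemma energy:
  fixes lam q sig eps ga gs La Ls a b :: real and ba bs :: "real \<Rightarrow> real"
  assumes lam: "0 \<le> lam" and q: "0 \<le> q" and sig: "0 < sig" and e0: "0 < eps" and e2: "eps < 2"
    and ga: "0 < ga" and gs: "0 < gs"
    and ban: "\<And>x. 0 \<le> ba x" and bsn: "\<And>x. 0 \<le> bs x"
    and bal: "\<And>x. ba x \<le> ba 0 + La * \<bar>x\<bar>" and bsl: "\<And>x. bs x \<le> bs 0 + Ls * \<bar>x\<bar>"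
    and La: "0 \<le> La" and Ls: "0 \<le> Ls" and a: "0 \<le> a" and b: "0 \<le> b"
    and big: "(4*ga + 8*gs) * (1 + 8*(q*(4*ba 0 + 8*bs 0) + (4*lam + 4*q*La + 8*q*Ls))/(sig*eps*(2-eps)))
               \<le> (eps+2)*ga*a + 4*eps*gs*b"
  shows "(eps+2) * FA lam eps sig q ba a b + 4*eps * FS lam eps sig q bs a b \<le> 0"
proof -
  define A0 where "A0 = q*(4*ba 0 + 8*bs 0)"
  define B0 where "B0 = 4*lam + 4*q*La + 8*q*Ls"
  define dl where "dl = sig*eps*(2-eps)"
  define s0 where "s0 = 1 + 8*(A0+B0)/dl"
  define ww where "ww = a + b"
  have dl0: "0 < dl" using sig e0 e2 by (simp add: dl_def)
  have A0: "0 \<le> A0" using q ban bsn by (simp add: A0_def)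
  have B0: "0 \<le> B0" using q lam La Ls by (simp add: B0_def)
  have id: "(eps+2) * FA lam eps sig q ba a b + 4*eps * FS lam eps sig q bs a b =
     lam*((3*eps-2)*(a-b)) - dl*b^4 - 2*dl*a^4 + q*((eps+2)*ba a + 4*eps*bs b)"
    using a b by (simp add: FA_def FS_def dl_def algebra_simps power4_eq_xxxx power3_eq_cube)
  have t1: "lam*((3*eps-2)*(a-b)) \<le> lam*(4*(a+b))"
  proof (intro mult_left_mono lam)
    have "(3*eps-2)*(a-b) = 3*(eps*a) - 2*a - 3*(eps*b) + 2*b" by (simp add: algebra_simps)
    moreover have "eps*a \<le> 2*a" using e2 a by (intro mult_right_mono) auto
    moreover have "0 \<le> eps*b" using e0 b by simp
    ultimately show "(3*eps-2)*(a-b) \<le> 4*(a+b)" using a b by (smt (verit))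
  qed
  have t2: "q*((eps+2)*ba a + 4*eps*bs b) \<le> q*(4*(ba 0 + La*a) + 8*(bs 0 + Ls*b))"
  proof (intro mult_left_mono q)
    have "(eps+2)*ba a \<le> 4*ba a" using e2 ban[of a] by (intro mult_right_mono) auto
    moreover have "4*eps*bs b \<le> 8*bs b" using e2 bsn[of b] by (intro mult_right_mono) auto
    moreover have "ba a \<le> ba 0 + La*a" using bal[of a] a by simp
    moreover have "bs b \<le> bs 0 + Ls*b" using bsl[of b] b by simp
    ultimately show "(eps+2)*ba a + 4*eps*bs b \<le> 4*(ba 0 + La*a) + 8*(bs 0 + Ls*b)" by (smt (verit))
  qed
  have t3: "q*(4*(ba 0 + La*a) + 8*(bs 0 + Ls*b)) \<le> A0 + B0 * ww - 4*lam*ww"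
  proof -
    have "q*(4*(ba 0 + La*a) + 8*(bs 0 + Ls*b)) = A0 + 4*(q*La*a) + 8*(q*Ls*b)"
      by (simp add: A0_def algebra_simps)
    moreover have "B0 * ww - 4*lam*ww = 4*(q*La*a) + 4*(q*La*b) + 8*(q*Ls*a) + 8*(q*Ls*b)"
      by (simp add: B0_def ww_def algebra_simps)
    moreover have "0 \<le> q*La*b" "0 \<le> q*Ls*a" using q La Ls a b by simp_all
    ultimately show ?thesis by linarith
  qed
  have t4: "- dl*b^4 - 2*dl*a^4 \<le> - dl*(a^4+b^4)"
    using dl0 by (simp add: algebra_simps)
  have ss: "s0 \<le> ww"
  proof -
    have "(eps+2)*ga*a \<le> 4*ga*a" using e2 ga a by (intro mult_right_mono) auto
    moreover have "4*eps*gs*b \<le> 8*gs*b" using e2 gs b by (intro mult_right_mono) auto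
    moreover have "(4*ga + 8*gs) * ww = 4*ga*a + 8*gs*b + (4*ga*b + 8*gs*a)"
      by (simp add: ww_def algebra_simps)
    moreover have "0 \<le> 4*ga*b + 8*gs*a" using ga gs a b by simp
    ultimately have "(4*ga + 8*gs) * s0 \<le> (4*ga + 8*gs) * ww" using big
      unfolding s0_def A0_def B0_def dl_def by linarith
    thus ?thesis using ga gs by simp
  qed
  have s1: "1 \<le> ww" using ss dl0 A0 B0 by (simp add: s0_def) (smt (verit) divide_nonneg_pos)
  have "A0 + B0 \<le> dl * ww / 8"
  proof -
    have "dl * s0 / 8 = dl/8 + (A0 + B0)" using dl0 by (simp add: s0_def field_simps)
    moreover have "dl * s0 / 8 \<le> dl * ww / 8" using ss dl0 by simp
    ultimately show ?thesis using dl0 by linarith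
  qed
  hence f1: "(A0 + B0) * ww^3 \<le> (dl * ww / 8) * ww^3" by (intro mult_right_mono) (use s1 in auto)
  have f2: "(dl * ww / 8) * ww^3 = dl * ww^4 / 8" by (simp add: power4_eq_xxxx power3_eq_cube)
  have f3: "A0 \<le> A0 * ww^3" using mult_left_mono[OF one_le_power[OF s1, of 3] A0] by simp
  have f4: "B0 * ww \<le> B0 * ww^3"
  proof -
    have "ww * 1 \<le> ww * (ww * ww)" using s1 mult_mono[OF s1 s1] by (intro mult_left_mono) auto
    hence "ww \<le> ww^3" by (simp add: power3_eq_cube)
    thus ?thesis using B0 by (intro mult_left_mono)
  qed
  have "ww^4 \<le> 8*(a^4+b^4)" unfolding ww_def by (rule pm4)
  hence f5: "dl * ww^4 / 8 \<le> dl * (a^4+b^4)" using dl0 by simp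
  have f6: "(A0 + B0) * ww^3 = A0 * ww^3 + B0 * ww^3" by (simp add: algebra_simps)
  have fin: "A0 + B0 * ww \<le> dl * (a^4+b^4)" using f1 f2 f3 f4 f5 f6 by linarith
  show ?thesis unfolding id using t1 t2 t3 t4 fin by (simp add: ww_def algebra_simps)
qed


theorem corollary4p3:
  fixes gamma_a gamma_s lam q sigma_B eps_a Ta0 Ts0 :: real
    and beta_a beta_s :: "real \<Rightarrow> real"
  assumes "gamma_a > 0" and "gamma_s > 0" and "lam \<ge> 0" and "q > 0" and "sigma_B > 0"
    and "0 < eps_a" and "eps_a < 2"
    and "\<exists>L. lipschitz_on L UNIV beta_a" and "\<exists>L. lipschitz_on L UNIV beta_s"
    and "\<forall>x. beta_a x \<ge> 0" and "\<forall>x. beta_s x > 0"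
    and "Ta0 \<ge> 0" and "Ts0 \<ge> 0"
  shows "\<exists>Ta Ts :: real \<Rightarrow> real. Ta 0 = Ta0 \<and> Ts 0 = Ts0 \<and>
    (\<forall>t\<ge>0. \<exists>dTa dTs.
       (Ta has_real_derivative dTa) (at t within {0..}) \<and>
       (Ts has_real_derivative dTs) (at t within {0..}) \<and>
       gamma_a * dTa = - lam * (Ta t - Ts t) + eps_a * sigma_B * \<bar>Ts t\<bar>^3 * Ts t
                    - 2 * eps_a * sigma_B * \<bar>Ta t\<bar>^3 * Ta t + q * beta_a (Ta t) \<and>
       gamma_s * dTs = - lam * (Ts t - Ta t) - sigma_B * \<bar>Ts t\<bar>^3 * Ts t
                    + eps_a * sigma_B * \<bar>Ta t\<bar>^3 * Ta t + q * beta_s (Ts t))"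
proof -
  note ga = assms(1) and gs = assms(2) and lam = assms(3) and q = assms(4) and sig = assms(5)
    and e0 = assms(6) and e2 = assms(7) and ban = assms(10) and bsp = assms(11)
    and Ta0 = assms(12) and Ts0 = assms(13)
  obtain La where La: "lipschitz_on La UNIV beta_a" using assms(8) by blast
  obtain Ls where Ls: "lipschitz_on Ls UNIV beta_s" using assms(9) by blast
  have La0: "0 \<le> La" using lipschitz_on_nonneg[OF La] .
  have Ls0: "0 \<le> Ls" using lipschitz_on_nonneg[OF Ls] .
  have bla: "\<bar>beta_a x - beta_a y\<bar> \<le> La * \<bar>x - y\<bar>" for x y
    using lipschitz_onD[OF La, of x y] by (simp add: dist_real_def)
  have bls: "\<bar>beta_s x - beta_s y\<bar> \<le> Ls * \<bar>x - y\<bar>" for x y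
    using lipschitz_onD[OF Ls, of x y] by (simp add: dist_real_def)
  have bal: "beta_a x \<le> beta_a 0 + La * \<bar>x\<bar>" for x
  proof -
    have "beta_a x - beta_a 0 \<le> \<bar>beta_a x - beta_a 0\<bar>" by simp
    thus ?thesis using bla[of x 0] by simp
  qed
  have bsl: "beta_s x \<le> beta_s 0 + Ls * \<bar>x\<bar>" for x
  proof -
    have "beta_s x - beta_s 0 \<le> \<bar>beta_s x - beta_s 0\<bar>" by simp
    thus ?thesis using bls[of x 0] by simp
  qed
  have bsn: "0 \<le> beta_s x" for x using bsp by (simp add: less_imp_le)
  define Fa where "Fa = FA lam eps_a sigma_B q beta_a"
  define Fs where "Fs = FS lam eps_a sigma_B q beta_s"
  define V where "V a b = (eps_a+2)*gamma_a*a + 4*eps_a*gamma_s*b" for a b :: real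
  define K0 where "K0 = (4*gamma_a + 8*gamma_s) * (1 + 8*(q*(4*beta_a 0 + 8*beta_s 0) + (4*lam + 4*q*La + 8*q*Ls))/(sigma_B*eps_a*(2-eps_a)))"
  define K where "K = max K0 (V Ta0 Ts0)"
  define R where "R = (K+1)/((eps_a+2)*gamma_a) + (K+1)/(4*eps_a*gamma_s)"
  have V0: "0 \<le> V Ta0 Ts0" using Ta0 Ts0 ga gs e0 by (simp add: V_def)
  have KV: "V Ta0 Ts0 \<le> K" by (simp add: K_def)
  have K1: "0 < K + 1" using V0 KV by linarith
  have pa: "0 < (eps_a+2)*gamma_a" using e0 ga by simp
  have ps: "0 < 4*eps_a*gamma_s" using e0 gs by simp
  have R1: "0 \<le> (K+1)/((eps_a+2)*gamma_a)" "0 \<le> (K+1)/(4*eps_a*gamma_s)"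
    using K1 pa ps by simp_all
  have R0: "0 \<le> R" using R1 by (simp add: R_def)
  have bnd: "a \<le> R \<and> b \<le> R" if "0 \<le> a" "0 \<le> b" "V a b < K + 1" for a b
  proof -
    have n1: "0 \<le> 4*eps_a*gamma_s*b" using that ps by simp
    have n2: "0 \<le> (eps_a+2)*gamma_a*a" using that pa by simp
    have "(eps_a+2)*gamma_a*a < K + 1" using that n1 unfolding V_def by linarith
    hence "a < (K+1)/((eps_a+2)*gamma_a)" using pa by (simp add: pos_less_divide_eq mult.commute)
    moreover have "4*eps_a*gamma_s*b < K + 1" using that n2 unfolding V_def by linarith
    hence "b < (K+1)/(4*eps_a*gamma_s)" using ps by (simp add: pos_less_divide_eq mult.commute)
    ultimately show ?thesis using R1 unfolding R_def by linarith
  qed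
  define cl where "cl y = max 0 (min R y)" for y :: real
  have cl: "0 \<le> cl y" "cl y \<le> R" for y using R0 by (auto simp: cl_def)
  have clid: "cl y = y" if "0 \<le> y" "y \<le> R" for y using that by (simp add: cl_def)
  define G where "G p = (Fa (cl (fst p)) (cl (snd p)) / gamma_a, Fs (cl (fst p)) (cl (snd p)) / gamma_s)"
    for p :: "real \<times> real"
  define Ca where "Ca = 2*lam + 12*eps_a * sigma_B*R^3 + q*La"
  define Cs where "Cs = 2*lam + 4 * sigma_B*R^3 + 4*eps_a * sigma_B*R^3 + q*Ls"
  define Lc where "Lc = 2*(Ca/gamma_a + Cs/gamma_s)"
  have Ca0: "0 \<le> Ca" using lam e0 sig q La0 R0 by (simp add: Ca_def)
  have Cs0: "0 \<le> Cs" using lam e0 sig q Ls0 R0 by (simp add: Cs_def)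
  have Lc0: "0 \<le> Lc" using Ca0 Cs0 ga gs by (simp add: Lc_def)
  have lipG: "norm (G x - G y) \<le> Lc * norm (x - y)" for x y
  proof -
    obtain x1 x2 where x: "x = (x1, x2)" by (cases x)
    obtain y1 y2 where y: "y = (y1, y2)" by (cases y)
    define d where "d = \<bar>x1 - y1\<bar> + \<bar>x2 - y2\<bar>"
    have d1: "\<bar>cl x1 - cl y1\<bar> \<le> d" using clamp_lip[of R x1 y1] abs_ge_zero[of "x2 - y2"]
      unfolding d_def cl_def by linarith
    have d2: "\<bar>cl x2 - cl y2\<bar> \<le> d" using clamp_lip[of R x2 y2] abs_ge_zero[of "x1 - y1"]
      unfolding d_def cl_def by linarith
    have h1: "\<bar>Fa (cl x1) (cl x2) - Fa (cl y1) (cl y2)\<bar> \<le> Ca * d"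
      unfolding Fa_def Ca_def
      by (rule FA_lip[OF lam _ _ _ bla La0 cl cl cl cl d1 d2]) (use e0 sig q in auto)
    have h2: "\<bar>Fs (cl x1) (cl x2) - Fs (cl y1) (cl y2)\<bar> \<le> Cs * d"
      unfolding Fs_def Cs_def
      by (rule FS_lip[OF lam _ _ _ bls Ls0 cl cl cl cl d1 d2]) (use e0 sig q in auto)
    have eqG: "G x - G y = ((Fa (cl x1) (cl x2) - Fa (cl y1) (cl y2)) / gamma_a,
                       (Fs (cl x1) (cl x2) - Fs (cl y1) (cl y2)) / gamma_s)"
      by (simp add: G_def x y diff_divide_distrib)
    have "norm (G x - G y) \<le> norm ((Fa (cl x1) (cl x2) - Fa (cl y1) (cl y2)) / gamma_a)
                              + norm ((Fs (cl x1) (cl x2) - Fs (cl y1) (cl y2)) / gamma_s)"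
      unfolding eqG by (rule norm_Pair_le)
    hence "norm (G x - G y) \<le> \<bar>Fa (cl x1) (cl x2) - Fa (cl y1) (cl y2)\<bar> / gamma_a
                              + \<bar>Fs (cl x1) (cl x2) - Fs (cl y1) (cl y2)\<bar> / gamma_s"
      using ga gs by simp
    also have "\<dots> \<le> Ca * d / gamma_a + Cs * d / gamma_s"
      using h1 h2 ga gs by (intro add_mono divide_right_mono) auto
    also have "\<dots> = (Ca / gamma_a + Cs / gamma_s) * d" by (simp add: field_simps)
    also have "\<dots> \<le> (Ca / gamma_a + Cs / gamma_s) * (2 * norm (x - y))"
    proof (rule mult_left_mono)
      have "\<bar>x1 - y1\<bar> \<le> norm (x - y)" using norm_fst_le[of "x1 - y1" "x2 - y2"] by (simp add: x y)
      moreover have "\<bar>x2 - y2\<bar> \<le> norm (x - y)" using norm_snd_le[of "x2 - y2" "x1 - y1"] by (simp add: x y)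
      ultimately show "d \<le> 2 * norm (x - y)" by (simp add: d_def)
      show "0 \<le> Ca / gamma_a + Cs / gamma_s" using Ca0 Cs0 ga gs by simp
    qed
    also have "\<dots> = Lc * norm (x - y)" using ga gs by (simp add: Lc_def field_simps)
    finally show ?thesis .
  qed
  obtain x where x0: "x 0 = (Ta0, Ts0)"
    and xd: "\<And>t. 0 \<le> t \<Longrightarrow> (x has_vector_derivative G (x t)) (at t within {0..})"
    using picard_global[OF lipG Lc0, of "(Ta0, Ts0)"] by blast
  define Ta where "Ta t = fst (x t)" for t
  define Ts where "Ts t = snd (x t)" for t
  have dA: "(Ta has_real_derivative fst (G (x t))) (at t within {0..})" if "0 \<le> t" for t
  proof -
    have "((\<lambda>t. fst (x t)) has_derivative (\<lambda>h. fst (h *\<^sub>R G (x t)))) (at t within {0..})"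
      using has_derivative_fst[OF xd[OF that, unfolded has_vector_derivative_def]] .
    thus ?thesis unfolding has_real_derivative_iff_has_vector_derivative has_vector_derivative_def Ta_def
      by simp
  qed
  have dS: "(Ts has_real_derivative snd (G (x t))) (at t within {0..})" if "0 \<le> t" for t
  proof -
    have "((\<lambda>t. snd (x t)) has_derivative (\<lambda>h. snd (h *\<^sub>R G (x t)))) (at t within {0..})"
      using has_derivative_snd[OF xd[OF that, unfolded has_vector_derivative_def]] .
    thus ?thesis unfolding has_real_derivative_iff_has_vector_derivative has_vector_derivative_def Ts_def
      by simp
  qed
  have Tainit: "Ta 0 = Ta0" and Tsinit: "Ts 0 = Ts0" using x0 by (simp_all add: Ta_def Ts_def)
  have Gfst: "fst (G (x t)) = Fa (cl (Ta t)) (cl (Ts t)) / gamma_a" for t by (simp add: G_def Ta_def Ts_def)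
  have Gsnd: "snd (G (x t)) = Fs (cl (Ta t)) (cl (Ts t)) / gamma_s" for t by (simp add: G_def Ta_def Ts_def)
  have Ta_nn: "0 \<le> Ta t" if t0: "0 \<le> t" for t
  proof -
    have "- Ta t \<le> 0"
    proof (rule barrier[of "\<lambda>t. - Ta t" "\<lambda>t. - fst (G (x t))" 0 t])
      show "((\<lambda>t. - Ta t) has_real_derivative - fst (G (x t))) (at t within {0..})" if "0 \<le> t" for t
        using DERIV_minus[OF dA[OF that]] .
      show "- Ta 0 \<le> 0" using Tainit Ta0 by simp
      show "0 \<le> t" by (rule t0)
      fix s assume "0 < s" "0 < - Ta s" "- Ta s < 0 + 1"
      hence "cl (Ta s) = 0" by (simp add: cl_def)
      moreover have "0 \<le> Fa 0 c" if "0 \<le> c" for c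
        using that lam e0 sig q ban by (simp add: Fa_def FA_def)
      ultimately have "0 \<le> fst (G (x s))" unfolding Gfst using cl ga by simp
      thus "- fst (G (x s)) \<le> 0" by simp
    qed
    thus ?thesis by simp
  qed
  have Ts_nn: "0 \<le> Ts t" if t0: "0 \<le> t" for t
  proof -
    have "- Ts t \<le> 0"
    proof (rule barrier[of "\<lambda>t. - Ts t" "\<lambda>t. - snd (G (x t))" 0 t])
      show "((\<lambda>t. - Ts t) has_real_derivative - snd (G (x t))) (at t within {0..})" if "0 \<le> t" for t
        using DERIV_minus[OF dS[OF that]] .
      show "- Ts 0 \<le> 0" using Tsinit Ts0 by simp
      show "0 \<le> t" by (rule t0)
      fix s assume "0 < s" "0 < - Ts s" "- Ts s < 0 + 1"
      hence "cl (Ts s) = 0" by (simp add: cl_def)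
      moreover have "0 \<le> Fs c 0" if "0 \<le> c" for c
        using that lam e0 sig q bsn by (simp add: Fs_def FS_def)
      ultimately have "0 \<le> snd (G (x s))" unfolding Gsnd using cl gs by simp
      thus "- snd (G (x s)) \<le> 0" by simp
    qed
    thus ?thesis by simp
  qed
  have Vb: "V (Ta t) (Ts t) \<le> K" if t0: "0 \<le> t" for t
  proof (rule barrier[of "\<lambda>t. V (Ta t) (Ts t)"
        "\<lambda>t. (eps_a+2)*gamma_a*fst (G (x t)) + 4*eps_a*gamma_s* snd (G (x t))" K t])
    show "((\<lambda>t. V (Ta t) (Ts t)) has_real_derivative
           (eps_a+2)*gamma_a*fst (G (x t)) + 4*eps_a*gamma_s* snd (G (x t))) (at t within {0..})"
      if "0 \<le> t" for t
      unfolding V_def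
      using DERIV_add[OF DERIV_cmult[OF dA[OF that], of "(eps_a+2)*gamma_a"] DERIV_cmult[OF dS[OF that], of "4*eps_a*gamma_s"]]
      by simp
    show "V (Ta 0) (Ts 0) \<le> K" using KV Tainit Tsinit by simp
    show "0 \<le> t" by (rule t0)
    fix s assume s: "0 < s" "K < V (Ta s) (Ts s)" "V (Ta s) (Ts s) < K + 1"
    have nn: "0 \<le> Ta s" "0 \<le> Ts s" using Ta_nn Ts_nn s by auto
    with bnd s have "Ta s \<le> R" "Ts s \<le> R" by auto
    hence c1: "cl (Ta s) = Ta s" "cl (Ts s) = Ts s" using nn clid by auto
    have "(eps_a+2)*gamma_a*fst (G (x s)) + 4*eps_a*gamma_s* snd (G (x s))
          = (eps_a+2) * Fa (Ta s) (Ts s) + 4*eps_a * Fs (Ta s) (Ts s)"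
      unfolding Gfst Gsnd c1 using ga gs by simp
    also have "\<dots> \<le> 0" unfolding Fa_def Fs_def
    proof (rule energy[OF lam less_imp_le[OF q] sig e0 e2 ga gs _ bsn bal bsl La0 Ls0 nn])
      show "0 \<le> beta_a x" for x using ban by simp
      show "(4*gamma_a + 8*gamma_s) * (1 + 8*(q*(4*beta_a 0 + 8*beta_s 0) + (4*lam + 4*q*La + 8*q*Ls))/(sigma_B*eps_a*(2-eps_a)))
               \<le> (eps_a+2)*gamma_a*Ta s + 4*eps_a*gamma_s*Ts s"
        using s(2) unfolding K_def K0_def V_def by linarith
    qed
    finally show "(eps_a+2)*gamma_a*fst (G (x s)) + 4*eps_a*gamma_s* snd (G (x s)) \<le> 0" .
  qed
  have main: "\<exists>dTa dTs.
       (Ta has_real_derivative dTa) (at t within {0..}) \<and>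
       (Ts has_real_derivative dTs) (at t within {0..}) \<and>
       gamma_a * dTa = - lam * (Ta t - Ts t) + eps_a * sigma_B * \<bar>Ts t\<bar>^3 * Ts t
                    - 2 * eps_a * sigma_B * \<bar>Ta t\<bar>^3 * Ta t + q * beta_a (Ta t) \<and>
       gamma_s * dTs = - lam * (Ts t - Ta t) - sigma_B * \<bar>Ts t\<bar>^3 * Ts t
                    + eps_a * sigma_B * \<bar>Ta t\<bar>^3 * Ta t + q * beta_s (Ts t)" if t0: "0 \<le> t" for t
  proof (intro exI conjI)
    have nn: "0 \<le> Ta t" "0 \<le> Ts t" using Ta_nn Ts_nn t0 by auto
    have "V (Ta t) (Ts t) < K + 1" using Vb[OF t0] by simp
    with bnd nn have "Ta t \<le> R" "Ts t \<le> R" by auto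
    hence c1: "cl (Ta t) = Ta t" "cl (Ts t) = Ts t" using nn clid by auto
    show "(Ta has_real_derivative fst (G (x t))) (at t within {0..})" by (rule dA[OF t0])
    show "(Ts has_real_derivative snd (G (x t))) (at t within {0..})" by (rule dS[OF t0])
    show "gamma_a * fst (G (x t)) = - lam * (Ta t - Ts t) + eps_a * sigma_B * \<bar>Ts t\<bar>^3 * Ts t
                    - 2 * eps_a * sigma_B * \<bar>Ta t\<bar>^3 * Ta t + q * beta_a (Ta t)"
      unfolding Gfst c1 using ga by (simp add: Fa_def FA_def)
    show "gamma_s * snd (G (x t)) = - lam * (Ts t - Ta t) - sigma_B * \<bar>Ts t\<bar>^3 * Ts t
                    + eps_a * sigma_B * \<bar>Ta t\<bar>^3 * Ta t + q * beta_s (Ts t)"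
      unfolding Gsnd c1 using gs by (simp add: Fs_def FS_def)
  qed
  show ?thesis
    by (intro exI[of _ Ta] exI[of _ Ts] conjI Tainit Tsinit allI impI main)
qed

end
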